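(* In the model of the context (with $\mathbf R_b=\mathbf I_M$, $M\ge2$, $\rho\in[0,1)$ fixed), suppose that $\Pr(Y>0)=1$ and $\Pr(\|\hat{\mathbf h}_b\|^2>0)=1$. Then there exists $\alpha_0\in(0,1)$ such that $\bar R_s^\infty(\alpha_0)>0$.
   Context: Let $M\ge 2$ be an integer; fix $\sigma^2>0$, $\tau_p>0$, $\rho_p>0$, $T_c>\tau_p$, $\eta=1-\tau_p/T_c$. Let $\mathbf R_e\in\mathbb C^{M\times M}$ be Hermitian positive definite, $\mathbf C\in\mathbb C^{M\times M}$ with spectral norm $\|\mathbf C\|\le1$, $\rho\in[0,1)$, and $\beta_b,\beta_e>0$. Let $\mathbf g_b,\mathbf u\sim\mathcal{CN}(\mathbf 0,\mathbf I_M)$ and $\mathbf n_p\sim\mathcal{CN}(\mathbf 0,\sigma^2\mathbf I_M)$ be mutually independent. Define $\mathbf h_b=\sqrt{\beta_b}\,\mathbf g_b$, $\mathbf g_e=\rho\mathbf C\mathbf g_b+\sqrt{1-\rho^2}\,\mathbf u$, $\mathbf h_e=\sqrt{\beta_e}\,\mathbf R_e^{1/2}\mathbf g_e$, $\mathbf y_p=\sqrt{\tau_p\rho_p}\,\mathbf h_b+\mathbf n_p$, the MMSE estimate $\hat{\mathbf h}_b=\sqrt{\tau_p\rho_p}\,\beta_b(\tau_p\rho_p\beta_b+\sigma^2)^{-1}\mathbf y_p$, and $\Omega_{\tilde h}=\dfrac{\beta_b\sigma^2}{\tau_p\rho_p\beta_b+\sigma^2}$ (the per-entry variance of the estimation error).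 Let $\mathbf w=\hat{\mathbf h}_b/\|\hat{\mathbf h}_b\|$ and let $\mathbf V\in\mathbb C^{M\times(M-1)}$ have orthonormal columns spanning the orthogonal complement of $\hat{\mathbf h}_b$. Set $X=\mathbf h_e^H\mathbf w$, $Y=\|\mathbf V^H\mathbf h_e\|^2$. For $\alpha\in(0,1)$ (fraction of power given to data) define $\gamma_b^\infty(\alpha)=\dfrac{\alpha\|\hat{\mathbf h}_b\|^2}{\Omega_{\tilde h}(\alpha+(1-\alpha)(M-1))}$, $\gamma_e^\infty(\alpha)=\dfrac{\alpha|X|^2}{(1-\alpha)Y}$, and the high-SNR ergodic secrecy rate $\bar R_s^\infty(\alpha)=\eta\,\mathbb E\big[(\log_2(1+\gamma_b^\infty(\alpha))-\log_2(1+\gamma_e^\infty(\alpha)))^+\big]$, with $(x)^+=\max\{0,x\}$. *)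

theory Defs
  imports "HOL-Analysis.Analysis" "HOL-Probability.Probability"
begin

text \<open>Complex linear algebra on complex^'m (dimension M = CARD('m)).\<close>

definition cinner :: "complex^'m \<Rightarrow> complex^'m \<Rightarrow> complex" where
  "cinner x y = (\<Sum>i\<in>UNIV. cnj (x$i) * y$i)"

definition conj_transpose :: "complex^'m^'n \<Rightarrow> complex^'n^'m" where
  "conj_transpose A = (\<chi> i j. cnj (A$j$i))"

definition hermitian :: "complex^'m^'m \<Rightarrow> bool" where
  "hermitian A \<longleftrightarrow> conj_transpose A = A"

definition pos_def_herm :: "complex^'m^'m \<Rightarrow> bool" where
  "pos_def_herm A \<longleftrightarrow> hermitian A \<and> (\<forall>x. x \<noteq> 0 \<longrightarrow> 0 < Re (cinner x (A *v x)))"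

definition pos_semidef_herm :: "complex^'m^'m \<Rightarrow> bool" where
  "pos_semidef_herm A \<longleftrightarrow> hermitian A \<and> (\<forall>x. 0 \<le> Re (cinner x (A *v x)))"

text \<open>The (unique) Hermitian positive semidefinite square root R^(1/2).\<close>
definition matrix_sqrt :: "complex^'m^'m \<Rightarrow> complex^'m^'m" where
  "matrix_sqrt A = (THE S. pos_semidef_herm S \<and> S ** S = A)"

definition spec_norm_le_1 :: "complex^'m^'m \<Rightarrow> bool" where
  "spec_norm_le_1 C \<longleftrightarrow> (\<forall>x. norm (C *v x) \<le> norm x)"

text \<open>Real and imaginary parts of the entries of a random complex vector, indexed by
  (vector number k, False = real part / True = imaginary part, entry j).\<close>
definition re_im_comps :: "('a \<Rightarrow> complex^'m) list \<Rightarrow> nat \<times> bool \<times> 'm \<Rightarrow> 'a \<Rightarrow> real" where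
  "re_im_comps Xs = (\<lambda>(k, b, j) \<omega>. if b then Im ((Xs ! k) \<omega> $ j) else Re ((Xs ! k) \<omega> $ j))"

text \<open>The random vectors Xs!k are mutually independent, with Xs!k \<sim> CN(0, vs!k \<cdot> I):
  all real and imaginary parts of all entries are independent real Gaussians
  with mean 0 and variance (vs!k)/2.\<close>
definition indep_circ_gaussians :: "'a measure \<Rightarrow> ('a \<Rightarrow> complex^'m) list \<Rightarrow> real list \<Rightarrow> bool" where
  "indep_circ_gaussians M Xs vs \<longleftrightarrow>
     length vs = length Xs \<and> (\<forall>v\<in>set vs. 0 < v) \<and>
     prob_space.indep_vars M (\<lambda>_. borel) (re_im_comps Xs) ({0..<length Xs} \<times> UNIV) \<and>
     (\<forall>k<length Xs. \<forall>b j. distributed M lborel (re_im_comps Xs (k, b, j))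
                                (normal_density 0 (sqrt (vs ! k / 2))))"

definition h_b_of :: "real \<Rightarrow> ('a \<Rightarrow> complex^'m) \<Rightarrow> 'a \<Rightarrow> complex^'m" where
  "h_b_of \<beta>_b g_b \<omega> = sqrt \<beta>_b *\<^sub>R g_b \<omega>"

definition g_e_of :: "real \<Rightarrow> complex^'m^'m \<Rightarrow> ('a \<Rightarrow> complex^'m) \<Rightarrow> ('a \<Rightarrow> complex^'m) \<Rightarrow> 'a \<Rightarrow> complex^'m" where
  "g_e_of \<rho> C g_b u \<omega> = \<rho> *\<^sub>R (C *v g_b \<omega>) + sqrt (1 - \<rho>\<^sup>2) *\<^sub>R u \<omega>"

definition h_e_of :: "real \<Rightarrow> complex^'m^'m \<Rightarrow> ('a \<Rightarrow> complex^'m) \<Rightarrow> 'a \<Rightarrow> complex^'m" where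
  "h_e_of \<beta>_e R_e g_e \<omega> = sqrt \<beta>_e *\<^sub>R (matrix_sqrt R_e *v g_e \<omega>)"

definition y_p_of :: "real \<Rightarrow> real \<Rightarrow> ('a \<Rightarrow> complex^'m) \<Rightarrow> ('a \<Rightarrow> complex^'m) \<Rightarrow> 'a \<Rightarrow> complex^'m" where
  "y_p_of \<tau>_p \<rho>_p h_b n_p \<omega> = sqrt (\<tau>_p * \<rho>_p) *\<^sub>R h_b \<omega> + n_p \<omega>"

text \<open>MMSE estimate of h_b.\<close>
definition hhat_of :: "real \<Rightarrow> real \<Rightarrow> real \<Rightarrow> real \<Rightarrow> ('a \<Rightarrow> complex^'m) \<Rightarrow> 'a \<Rightarrow> complex^'m" where
  "hhat_of \<tau>_p \<rho>_p \<beta>_b \<sigma>2 y_p \<omega> =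
     (sqrt (\<tau>_p * \<rho>_p) * \<beta>_b / (\<tau>_p * \<rho>_p * \<beta>_b + \<sigma>2)) *\<^sub>R y_p \<omega>"

definition Omega_of :: "real \<Rightarrow> real \<Rightarrow> real \<Rightarrow> real \<Rightarrow> real" where
  "Omega_of \<tau>_p \<rho>_p \<beta>_b \<sigma>2 = \<beta>_b * \<sigma>2 / (\<tau>_p * \<rho>_p * \<beta>_b + \<sigma>2)"

text \<open>X = h_e^H w with w = hhat/||hhat||, and Y = ||V^H h_e||^2, which equals the squared norm
  of the orthogonal projection of h_e onto the orthogonal complement of hhat, i.e.
  ||h_e - (w^H h_e) w||^2 (independent of the choice of the orthonormal basis V).\<close>
definition w_of :: "('a \<Rightarrow> complex^'m) \<Rightarrow> 'a \<Rightarrow> complex^'m" where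
  "w_of hhat \<omega> = (1 / norm (hhat \<omega>)) *\<^sub>R hhat \<omega>"

definition X_of :: "('a \<Rightarrow> complex^'m) \<Rightarrow> ('a \<Rightarrow> complex^'m) \<Rightarrow> 'a \<Rightarrow> complex" where
  "X_of h_e hhat \<omega> = cinner (h_e \<omega>) (w_of hhat \<omega>)"

definition Y_of :: "('a \<Rightarrow> complex^'m) \<Rightarrow> ('a \<Rightarrow> complex^'m) \<Rightarrow> 'a \<Rightarrow> real" where
  "Y_of h_e hhat \<omega> =
     (norm (h_e \<omega> - cinner (w_of hhat \<omega>) (h_e \<omega>) *s w_of hhat \<omega>))\<^sup>2"

end

theory Submission
  imports Defs
begin
lemma cont_nth[continuous_intros]: "continuous F f \<Longrightarrow> continuous F (\<lambda>x. f x $ i)"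
  unfolding continuous_def by (rule tendsto_vec_nth)

lemma cont_lambda: "(\<And>i. continuous F (f i)) \<Longrightarrow> continuous F (\<lambda>x. \<chi> i. f i x)"
  unfolding continuous_def by (rule tendsto_vec_lambda) auto

lemma cont_cinner[continuous_intros]:
  "continuous F f \<Longrightarrow> continuous F g \<Longrightarrow> continuous F (\<lambda>x. cinner (f x) (g x))"
  unfolding cinner_def by (intro continuous_intros)

lemma cont_smult[continuous_intros]:
  fixes g :: "_ \<Rightarrow> complex^'m"
  shows "continuous F f \<Longrightarrow> continuous F g \<Longrightarrow> continuous F (\<lambda>x. f x *s g x)"
  unfolding vector_scalar_mult_def by (intro cont_lambda continuous_intros)

lemma cont_mv[continuous_intros]:
  fixes A :: "complex^'m^'n"
  shows "continuous F f \<Longrightarrow> continuous F (\<lambda>x. A *v f x)"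
  using bounded_linear.continuous[OF matrix_vector_mul_bounded_linear[of A]] by blast

lemma one_plus_ne0: "0 \<le> (a::real) \<Longrightarrow> 0 \<le> b \<Longrightarrow> 1 + a * c\<^sup>2 / b \<noteq> 0"
proof -
  assume "0 \<le> a" "0 \<le> b"
  then have "0 \<le> a * c\<^sup>2 / b" by simp
  then show ?thesis by linarith
qed

lemma contF:
  fixes k s1 s2 s3 s4 r a K :: real and S C :: "complex^'m^'m" and p :: "(complex^'m) \<times> (complex^'m) \<times> (complex^'m)"
  defines "HH \<equiv> \<lambda>x. k *\<^sub>R (s1 *\<^sub>R (s2 *\<^sub>R fst x) + snd (snd x))"
    and "HE \<equiv> \<lambda>x. s3 *\<^sub>R (S *v (r *\<^sub>R (C *v fst x) + s4 *\<^sub>R fst (snd x)))"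
  defines "W \<equiv> \<lambda>x. (1 / norm (HH x)) *\<^sub>R HH x"
  assumes "HH p \<noteq> 0" "(norm (HE p - cinner (W p) (HE p) *s W p))\<^sup>2 > 0"
    and "K > 0" "0 < a" "a < 1"
  shows "isCont (\<lambda>x. max 0 (log 2 (1 + a * (norm (HH x))\<^sup>2 / K)
       - log 2 (1 + a * (cmod (cinner (HE x) (W x)))\<^sup>2 / ((1 - a) * (norm (HE x - cinner (W x) (HE x) *s W x))\<^sup>2)))) p"
proof -
  have c1: "continuous (at p) HH" unfolding HH_def by (intro continuous_intros)
  have c2: "continuous (at p) HE" unfolding HE_def by (intro continuous_intros)
  have nn: "0 \<le> (1 - a) * (norm (HE p - cinner (W p) (HE p) *s W p))\<^sup>2" using assms by simp
  show ?thesis unfolding W_def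
    using assms(3-) c1 c2 nn
    by (intro continuous_intros one_plus_ne0) (auto simp: W_def)
qed
lemma box_dist:
  fixes x y :: "complex^'m"
  assumes "\<delta> > 0" "\<And>j. \<bar>Re (x$j) - Re (y$j)\<bar> < \<delta>" "\<And>j. \<bar>Im (x$j) - Im (y$j)\<bar> < \<delta>"
  shows "dist x y < 2 * real CARD('m) * \<delta>"
proof -
  have "dist x y = norm (x - y)" by (simp add: dist_norm)
  also have "\<dots> \<le> (\<Sum>j\<in>UNIV. norm ((x - y) $ j))" unfolding norm_vec_def by (rule L2_set_le_sum) auto
  also have "\<dots> < (\<Sum>j\<in>(UNIV::'m set). 2 * \<delta>)"
  proof (rule sum_strict_mono)
    fix j :: 'm
    have "norm ((x - y) $ j) \<le> \<bar>Re ((x - y) $ j)\<bar> + \<bar>Im ((x - y) $ j)\<bar>" by (rule cmod_le)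
    also have "\<dots> < 2 * \<delta>" using assms(2,3)[of j] by simp
    finally show "norm ((x - y) $ j) < 2 * \<delta>" .
  qed auto
  also have "\<dots> = 2 * real CARD('m) * \<delta>" by simp
  finally show ?thesis .
qed

lemma pos_interval_prob:
  assumes "prob_space M" "distributed M lborel X (\<lambda>x. ennreal (normal_density 0 s x))" "s > 0" "a < b"
  shows "measure M (X -` {a<..<b} \<inter> space M) > 0"
proof -
  interpret prob_space M by fact
  have e: "emeasure M (X -` {a<..<b} \<inter> space M) = (\<integral>\<^sup>+x. ennreal (normal_density 0 s x) * indicator {a<..<b} x \<partial>lborel)"
    using distributed_emeasure[OF assms(2)] by simp
  have "(\<integral>\<^sup>+x. ennreal (normal_density 0 s x) * indicator {a<..<b} x \<partial>lborel) \<noteq> 0"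
  proof
    assume "(\<integral>\<^sup>+x. ennreal (normal_density 0 s x) * indicator {a<..<b} x \<partial>lborel) = 0"
    then have "AE x in lborel. ennreal (normal_density 0 s x) * indicator {a<..<b} x = 0"
      by (subst (asm) nn_integral_0_iff_AE) auto
    then have "AE x in lborel. x \<notin> {a<..<b}"
      by eventually_elim (use normal_density_pos[OF assms(3), of 0] in \<open>auto split: split_indicator, metis less_irrefl\<close>)
    then have "{a<..<b} \<in> null_sets lborel" by (subst AE_iff_null_sets) auto
    then show False using assms(4) by (auto simp: null_sets_def)
  qed
  then have "emeasure M (X -` {a<..<b} \<inter> space M) \<noteq> 0" using e by simp
  then show ?thesis by (simp add: emeasure_eq_measure less_le)
qed

theorem lemma1:
  fixes M :: "'a measure"
    and g_b u n_p :: "'a \<Rightarrow> complex^'m"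
    and C R_e :: "complex^'m^'m"
    and \<sigma>2 \<tau>_p \<rho>_p T_c \<rho> \<beta>_b \<beta>_e :: real
  defines "hhat \<equiv> hhat_of \<tau>_p \<rho>_p \<beta>_b \<sigma>2 (y_p_of \<tau>_p \<rho>_p (h_b_of \<beta>_b g_b) n_p)"
    and "h_e \<equiv> h_e_of \<beta>_e R_e (g_e_of \<rho> C g_b u)"
  assumes "prob_space M"
    and "CARD('m) \<ge> 2"
    and "\<sigma>2 > 0" and "\<tau>_p > 0" and "\<rho>_p > 0" and "T_c > \<tau>_p"
    and "pos_def_herm R_e"
    and "spec_norm_le_1 C"
    and "0 \<le> \<rho>" and "\<rho> < 1"
    and "\<beta>_b > 0" and "\<beta>_e > 0"
    and "indep_circ_gaussians M [g_b, u, n_p] [1, 1, \<sigma>2]"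
    and "measure M {\<omega> \<in> space M. Y_of h_e hhat \<omega> > 0} = 1"
    and "measure M {\<omega> \<in> space M. (norm (hhat \<omega>))\<^sup>2 > 0} = 1"
  shows "\<exists>\<alpha>\<^sub>0 \<in> {0<..<1::real}.
           ennreal (1 - \<tau>_p / T_c) *
             (\<integral>\<^sup>+ \<omega>. ennreal (max 0
                 (log 2 (1 + \<alpha>\<^sub>0 * (norm (hhat \<omega>))\<^sup>2
                        / (Omega_of \<tau>_p \<rho>_p \<beta>_b \<sigma>2 * (\<alpha>\<^sub>0 + (1 - \<alpha>\<^sub>0) * (real CARD('m) - 1))))
                - log 2 (1 + \<alpha>\<^sub>0 * (cmod (X_of h_e hhat \<omega>))\<^sup>2
                        / ((1 - \<alpha>\<^sub>0) * Y_of h_e hhat \<omega>)))) \<partial>M) > 0"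
proof -
  interpret P: prob_space M by fact
  define S where "S = matrix_sqrt R_e"
  define sr where "sr = sqrt (1 - \<rho>\<^sup>2)"
  have "\<rho>\<^sup>2 < 1" using assms(11,12) by (simp add: power_less_one_iff abs_less_iff)
  then have sr_pos: "sr > 0" unfolding sr_def by simp
  have he_eq: "\<And>\<omega>. h_e \<omega> = sqrt \<beta>_e *\<^sub>R (S *v (\<rho> *\<^sub>R (C *v g_b \<omega>) + sr *\<^sub>R u \<omega>))"
    by (simp add: h_e_def h_e_of_def g_e_of_def S_def sr_def)
  obtain v where v: "S *v v \<noteq> 0"
  proof (rule ccontr)
    assume "\<not> thesis"
    then have z: "\<And>v. S *v v = 0" using that by blast
    have "\<And>\<omega>. Y_of h_e hhat \<omega> = 0"
      by (simp add: Y_of_def he_eq z cinner_def)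
    then have "{\<omega> \<in> space M. Y_of h_e hhat \<omega> > 0} = {}" by simp
    then show False using assms(16) by (metis measure_empty zero_neq_one)
  qed
  define u0 where "u0 = (1 / sr) *\<^sub>R v"
  define h0 where "h0 = sqrt \<beta>_e *\<^sub>R (S *v v)"
  have h0nz: "h0 \<noteq> 0" using v assms(14) by (simp add: h0_def)
  then obtain i where i: "h0 $ i \<noteq> 0" by (metis vec_eq_iff zero_index)
  obtain j where j: "j \<noteq> i"
  proof (rule ccontr)
    assume "\<not> thesis"
    then have "\<forall>j. j = i" using that by blast
    then have "(UNIV :: 'm set) = {i}" by auto
    then have "card (UNIV :: 'm set) = card {i}" by (rule arg_cong)
    then have "CARD('m) = 1" by simp
    then show False using assms(4) by simp
  qed
  define e where "e = (\<chi> k. if k = i then cnj (h0$j) else if k = j then - cnj (h0$i) else 0)"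
  have e_j: "e $ j = - cnj (h0$i)" using j by (simp add: e_def)
  then have enz: "e \<noteq> 0" using i by (metis complex_cnj_zero_iff neg_equal_0_iff_equal zero_index)
  have ci1: "cinner h0 e = 0"
  proof -
    have "cinner h0 e = (\<Sum>k\<in>UNIV. (if k = i then cnj (h0$i) * cnj (h0$j) else 0) + (if k = j then - (cnj (h0$j) * cnj (h0$i)) else 0))"
      unfolding cinner_def by (rule sum.cong) (use j in \<open>auto simp: e_def\<close>)
    also have "\<dots> = 0" by (simp add: sum.distrib)
    finally show ?thesis .
  qed
  have ci2: "cinner e h0 = 0"
  proof -
    have "cinner e h0 = (\<Sum>k\<in>UNIV. (if k = i then h0$j * h0$i else 0) + (if k = j then - (h0$i * h0$j) else 0))"
      unfolding cinner_def by (rule sum.cong) (use j in \<open>auto simp: e_def\<close>)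
    also have "\<dots> = 0" by (simp add: sum.distrib)
    finally show ?thesis .
  qed
  define kk where "kk = sqrt (\<tau>_p * \<rho>_p) * \<beta>_b / (\<tau>_p * \<rho>_p * \<beta>_b + \<sigma>2)"
  have kk_pos: "kk > 0" using assms(5,6,7,13) unfolding kk_def by (intro divide_pos_pos mult_pos_pos add_pos_pos) auto
  define \<alpha> :: real where "\<alpha> = 1/2"
  define K where "K = Omega_of \<tau>_p \<rho>_p \<beta>_b \<sigma>2 * (\<alpha> + (1 - \<alpha>) * (real CARD('m) - 1))"
  have "real CARD('m) - 1 \<ge> 0" using assms(4) by simp
  then have K_pos: "K > 0" unfolding K_def Omega_of_def \<alpha>_def using assms(5,6,7,13)
    by (intro divide_pos_pos mult_pos_pos add_pos_pos add_pos_nonneg) auto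
  define HH where "HH = (\<lambda>x::(complex^'m) \<times> (complex^'m) \<times> (complex^'m).
      kk *\<^sub>R (sqrt (\<tau>_p * \<rho>_p) *\<^sub>R (sqrt \<beta>_b *\<^sub>R fst x) + snd (snd x)))"
  define HE where "HE = (\<lambda>x::(complex^'m) \<times> (complex^'m) \<times> (complex^'m).
      sqrt \<beta>_e *\<^sub>R (S *v (\<rho> *\<^sub>R (C *v fst x) + sr *\<^sub>R fst (snd x))))"
  define W where "W = (\<lambda>x. (1 / norm (HH x)) *\<^sub>R HH x)"
  define F where "F = (\<lambda>x. max 0 (log 2 (1 + \<alpha> * (norm (HH x))\<^sup>2 / K)
       - log 2 (1 + \<alpha> * (cmod (cinner (HE x) (W x)))\<^sup>2 / ((1 - \<alpha>) * (norm (HE x - cinner (W x) (HE x) *s W x))\<^sup>2))))"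
  define p where "p = ((0::complex^'m), u0, e)"
  have HHp: "HH p = kk *\<^sub>R e" by (simp add: HH_def p_def)
  have HHpnz: "HH p \<noteq> 0" using HHp kk_pos enz by simp
  have HEp: "HE p = h0" using sr_pos by (simp add: HE_def p_def u0_def h0_def)
  have Wp: "W p = (kk / norm (HH p)) *\<^sub>R e" by (simp add: W_def HHp)
  have cs1: "cinner x (c *\<^sub>R y) = complex_of_real c * cinner x y" for x y :: "complex^'m" and c :: real
    unfolding cinner_def by (simp add: sum_distrib_left scaleR_conv_of_real[where 'a=complex] mult_ac)
  have cs2: "cinner (c *\<^sub>R x) y = complex_of_real c * cinner x y" for x y :: "complex^'m" and c :: real
    unfolding cinner_def by (simp add: sum_distrib_left scaleR_conv_of_real[where 'a=complex] mult_ac)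
  have X0: "cinner (HE p) (W p) = 0" by (simp add: HEp Wp cs1 ci1)
  have X0': "cinner (W p) (HE p) = 0" by (simp add: HEp Wp cs2 ci2)
  have Yp: "(norm (HE p - cinner (W p) (HE p) *s W p))\<^sup>2 > 0"
    using X0' HEp h0nz by simp
  have Fp: "F p > 0"
  proof -
    have "0 < \<alpha> * (norm (HH p))\<^sup>2 / K" using HHpnz K_pos by (simp add: \<alpha>_def)
    then have "0 < log 2 (1 + \<alpha> * (norm (HH p))\<^sup>2 / K)" by simp
    then show ?thesis by (simp add: F_def X0)
  qed
  have cont: "isCont F p"
    unfolding F_def W_def HH_def HE_def
    by (rule contF) (use HHpnz Yp K_pos in \<open>auto simp: \<alpha>_def HH_def HE_def W_def\<close>)
  obtain d where d: "d > 0" "\<And>x. dist x p < d \<Longrightarrow> dist (F x) (F p) < F p / 2"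
    using cont Fp unfolding continuous_at_eps_delta by (meson half_gt_zero)
  have Fbig: "F x > F p / 2" if "dist x p < d" for x
    using d(2)[OF that] unfolding dist_real_def by linarith
  define comps where "comps = re_im_comps [g_b, u, n_p]"
  define pcs where "pcs = (\<lambda>i. re_im_comps [(\<lambda>_::unit. 0::complex^'m), (\<lambda>_. u0), (\<lambda>_. e)] i ())"
  define I where "I = ({0..<3} \<times> UNIV :: (nat \<times> bool \<times> 'm) set)"
  define \<delta> where "\<delta> = d / (6 * real CARD('m))"
  have \<delta>_pos: "\<delta> > 0" using d(1) by (simp add: \<delta>_def)
  define Ai where "Ai = (\<lambda>i. comps i -` {pcs i - \<delta> <..< pcs i + \<delta>} \<inter> space M)"
  define B where "B = (\<Inter>i\<in>I. Ai i)"
  have G: "length [g_b, u, n_p] = length [1, 1, \<sigma>2]" "\<forall>v\<in>set [1, 1, \<sigma>2]. 0 < v"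
    "P.indep_vars (\<lambda>_. borel) comps I"
    "\<forall>k<3. \<forall>b j. distributed M lborel (comps (k, b, j)) (normal_density 0 (sqrt ([1, 1, \<sigma>2] ! k / 2)))"
    using assms(15) unfolding indep_circ_gaussians_def comps_def I_def by (auto simp: numeral_3_eq_3)
  have rv: "\<forall>i\<in>I. comps i \<in> measurable M borel" and ind: "P.indep_sets (\<lambda>i. {comps i -` A \<inter> space M |A. A \<in> sets borel}) I"
    using G(3) unfolding P.indep_vars_def2 by auto
  have finI: "finite I" "I \<noteq> {}" by (auto simp: I_def)
  have AiF1: "Ai i \<in> {comps i -` A \<inter> space M |A. A \<in> sets borel}" for i
    unfolding Ai_def by (rule CollectI, rule exI[where x="{pcs i - \<delta> <..< pcs i + \<delta>}"]) simp
  have AiF: "\<forall>i\<in>I. Ai i \<in> {comps i -` A \<inter> space M |A. A \<in> sets borel}"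
    using AiF1 by blast
  have probB: "P.prob B = (\<Prod>i\<in>I. P.prob (Ai i))"
    unfolding B_def by (rule P.indep_setsD[OF ind subset_refl finI(2) finI(1) AiF])
  have pos_i: "P.prob (Ai i) > 0" if iI: "i \<in> I" for i
  proof -
    obtain k b j where kbj0: "i = (k, b, j)" by (cases i)
    have kbj: "i = (k, b, j)" "k < 3" using kbj0 iI by (auto simp: I_def)
    have vpos: "[1, 1, \<sigma>2] ! k > 0" using kbj(2) assms(5) by (auto simp: less_Suc_eq numeral_3_eq_3 nth_Cons')
    have dist: "distributed M lborel (comps i) (normal_density 0 (sqrt ([1, 1, \<sigma>2] ! k / 2)))"
      using G(4) kbj by auto
    show ?thesis unfolding Ai_def
      by (rule pos_interval_prob[OF assms(3) dist]) (use vpos \<delta>_pos in auto)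
  qed
  have probB_pos: "P.prob B > 0" unfolding probB using pos_i by (intro prod_pos) auto
  have Bsets: "B \<in> sets M" unfolding B_def
    using finI rv unfolding Ai_def by (intro sets.finite_INT) (auto intro: measurable_sets)
  have inB: "F (g_b \<omega>, u \<omega>, n_p \<omega>) > F p / 2" if "\<omega> \<in> B" for \<omega>
  proof -
    have c: "\<bar>comps i \<omega> - pcs i\<bar> < \<delta>" if "i \<in> I" for i
    proof -
      have "\<omega> \<in> Ai i" using \<open>\<omega> \<in> B\<close> that unfolding B_def by blast
      then have "pcs i - \<delta> < comps i \<omega> \<and> comps i \<omega> < pcs i + \<delta>" by (simp add: Ai_def)
      then show ?thesis unfolding abs_less_iff by linarith
    qed
    have d1: "dist (g_b \<omega>) 0 < 2 * real CARD('m) * \<delta>"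
      by (rule box_dist[OF \<delta>_pos]) (use c[of "(0, False, _)"] c[of "(0, True, _)"] in \<open>auto simp: I_def comps_def pcs_def re_im_comps_def\<close>)
    have d2: "dist (u \<omega>) u0 < 2 * real CARD('m) * \<delta>"
      by (rule box_dist[OF \<delta>_pos]) (use c[of "(1, False, _)"] c[of "(1, True, _)"] in \<open>auto simp: I_def comps_def pcs_def re_im_comps_def\<close>)
    have d3: "dist (n_p \<omega>) e < 2 * real CARD('m) * \<delta>"
      by (rule box_dist[OF \<delta>_pos]) (use c[of "(2, False, _)"] c[of "(2, True, _)"] in \<open>auto simp: I_def comps_def pcs_def re_im_comps_def\<close>)
    have "dist (g_b \<omega>, u \<omega>, n_p \<omega>) p \<le> dist (g_b \<omega>) 0 + (dist (u \<omega>) u0 + dist (n_p \<omega>) e)"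
    proof -
      have "dist (g_b \<omega>, u \<omega>, n_p \<omega>) p = norm (g_b \<omega> - 0, u \<omega> - u0, n_p \<omega> - e)"
        by (simp add: dist_norm p_def)
      also have "\<dots> \<le> norm (g_b \<omega> - 0) + norm (u \<omega> - u0, n_p \<omega> - e)" by (rule norm_Pair_le)
      also have "\<dots> \<le> norm (g_b \<omega> - 0) + (norm (u \<omega> - u0) + norm (n_p \<omega> - e))" using norm_Pair_le by auto
      finally show ?thesis by (simp add: dist_norm)
    qed
    also have "\<dots> < 6 * real CARD('m) * \<delta>" using d1 d2 d3 by simp
    also have "\<dots> = d" by (simp add: \<delta>_def)
    finally show ?thesis by (rule Fbig)
  qed
  have integrand: "max 0 (log 2 (1 + (1/2) * (norm (hhat \<omega>))\<^sup>2
                        / (Omega_of \<tau>_p \<rho>_p \<beta>_b \<sigma>2 * ((1/2) + (1 - (1/2)) * (real CARD('m) - 1))))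
                - log 2 (1 + (1/2) * (cmod (X_of h_e hhat \<omega>))\<^sup>2
                        / ((1 - (1/2)) * Y_of h_e hhat \<omega>))) = F (g_b \<omega>, u \<omega>, n_p \<omega>)" for \<omega>
    unfolding F_def K_def \<alpha>_def HH_def HE_def W_def X_of_def Y_of_def w_of_def he_eq
    by (simp add: hhat_def hhat_of_def y_p_of_def h_b_of_def kk_def)
  have "0 < ennreal (F p / 2) * emeasure M B"
    using Fp probB_pos by (simp add: ennreal_zero_less_mult_iff P.emeasure_eq_measure)
  also have "\<dots> = (\<integral>\<^sup>+ \<omega>. ennreal (F p / 2) * indicator B \<omega> \<partial>M)"
    using Bsets by (simp add: nn_integral_cmult_indicator)
  also have "\<dots> \<le> (\<integral>\<^sup>+ \<omega>. ennreal (F (g_b \<omega>, u \<omega>, n_p \<omega>)) \<partial>M)"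
  proof (rule nn_integral_mono)
    fix \<omega>
    show "ennreal (F p / 2) * indicator B \<omega> \<le> ennreal (F (g_b \<omega>, u \<omega>, n_p \<omega>))"
    proof (cases "\<omega> \<in> B")
      case True
      then show ?thesis using inB[OF True] by (simp add: ennreal_leI)
    qed simp
  qed
  also have "\<dots> = (\<integral>\<^sup>+ \<omega>. ennreal (max 0 (log 2 (1 + (1/2) * (norm (hhat \<omega>))\<^sup>2
                        / (Omega_of \<tau>_p \<rho>_p \<beta>_b \<sigma>2 * ((1/2) + (1 - (1/2)) * (real CARD('m) - 1))))
                - log 2 (1 + (1/2) * (cmod (X_of h_e hhat \<omega>))\<^sup>2
                        / ((1 - (1/2)) * Y_of h_e hhat \<omega>)))) \<partial>M)"
    by (rule nn_integral_cong) (rule arg_cong[where f=ennreal], rule integrand[symmetric])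
  finally have pos: "0 < (\<integral>\<^sup>+ \<omega>. ennreal (max 0 (log 2 (1 + (1/2) * (norm (hhat \<omega>))\<^sup>2
                        / (Omega_of \<tau>_p \<rho>_p \<beta>_b \<sigma>2 * ((1/2) + (1 - (1/2)) * (real CARD('m) - 1))))
                - log 2 (1 + (1/2) * (cmod (X_of h_e hhat \<omega>))\<^sup>2
                        / ((1 - (1/2)) * Y_of h_e hhat \<omega>)))) \<partial>M)" .
  have "0 < 1 - \<tau>_p / T_c" using assms(6,8) by (simp add: field_simps)
  then show ?thesis using pos
    by (intro bexI[where x="1/2"]) (auto simp: ennreal_zero_less_mult_iff)
qed

end
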